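(* Let $M$ be a von Neumann algebra acting on a separable Hilbert space $\mathcal H$, $\Omega\in\mathcal H$ a separating vector for $M$, and $T,S\in\mathcal B(\mathcal H)$ injective operators such that the maps $x\mapsto Tx\Omega$ and $x\mapsto Sx\Omega$ from $M$ to $\mathcal H$ are compact. Let $L_1(x):=\|Tx\Omega\|$ and $L_2(x):=\|Sx\Omega\|$ (dual-Lip-norms on $M$). Then $J(x,y):=\|Tx\Omega+Sy\Omega\|$, $(x,y)\in M\oplus M$, belongs to $\mathcal L((M,L_1),(M,L_2))$, and $$\mathrm{dist}_{qGH^*}((M,L_1),(M,L_2))\le\sup_{x\in M,\ \|x\|=1}\|(T-S)x\Omega\|.$$
   Context: A dual-Lip-norm on a von Neumann algebra $M$ is a norm on $M$ (everywhere finite) inducing the $w^*$-topology on bounded subsets of $M$; a Lip-von Neumann algebra (LvNA) is a pair $(M,L_M)$ with $L_M$ such a norm. A linear map is compact if it maps the unit ball to a relatively norm-compact set. $L_M$ is extended to $\mathcal M_2(M)$ ($2\times2$ matrices over $M$) by $L_M((a_{ij}))=\max_{i,j}L_M(a_{ij})$. For LvNAs $(M,L_M)$, $(N,L_N)$, $\mathcal L((M,L_M),(N,L_N))$ is the set of seminorms $L$ on $M\oplus N$ with $L(x,0)=L_M(x)$ and $L(0,y)=L_N(y)$ for all $x\in M,y\in N$; each such $L$ is extended to $\mathcal M_2(M)\oplus\mathcal M_2(N)\cong\mathcal M_2(M\oplus N)$ by entrywise maximum. $X_M=\{x\in\mathcal M_2(M): x\ge 0,\ \|x\|\le 1\}$,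 and similarly $X_N$. For such $L$, $\mathrm{dist}^L_H(X_M,X_N)=\max\big(\sup_{x\in X_M}\inf_{y\in X_N}L(x,-y),\ \sup_{y\in X_N}\inf_{x\in X_M}L(x,-y)\big)$, and $\mathrm{dist}_{qGH^*}((M,L_M),(N,L_N))=\inf_{L}\mathrm{dist}^L_H(X_M,X_N)$, the infimum over $L\in\mathcal L((M,L_M),(N,L_N))$. *)

theory Defs
  imports "HOL-Analysis.Analysis"
begin

text \<open>A complex Hilbert space is modelled as a real Hilbert space (type class
  real_inner + complete_space) together with a complex structure ci
  (multiplication by the imaginary unit), which is real-linear, squares to -1 and
  is orthogonal.  The complex inner product is then
  <u,v>_C = inner u v + i * inner u (ci v); its real part is the real inner product.\<close>

definition complex_structure :: "('h::real_inner \<Rightarrow> 'h) \<Rightarrow> bool" where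
  "complex_structure ci \<longleftrightarrow> linear ci \<and> (\<forall>v. ci (ci v) = - v)
     \<and> (\<forall>u v. inner (ci u) (ci v) = inner u v)"

definition separable_space_set :: "'h::metric_space set \<Rightarrow> bool" where
  "separable_space_set H \<longleftrightarrow> (\<exists>D. countable D \<and> D \<subseteq> H \<and> H \<subseteq> closure D)"

definition fadd :: "('h \<Rightarrow> 'h::real_vector) \<Rightarrow> ('h \<Rightarrow> 'h) \<Rightarrow> 'h \<Rightarrow> 'h" where
  "fadd x y = (\<lambda>v. x v + y v)"
definition fneg :: "('h \<Rightarrow> 'h::real_vector) \<Rightarrow> 'h \<Rightarrow> 'h" where
  "fneg x = (\<lambda>v. - x v)"
definition fzero :: "'h \<Rightarrow> 'h::real_vector" where
  "fzero = (\<lambda>v. 0)"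

definition cscale :: "('h \<Rightarrow> 'h::real_vector) \<Rightarrow> complex \<Rightarrow> ('h \<Rightarrow> 'h) \<Rightarrow> 'h \<Rightarrow> 'h" where
  "cscale ci c x = (\<lambda>v. Re c *\<^sub>R x v + Im c *\<^sub>R ci (x v))"

text \<open>Bounded (complex-)linear operators on H: bounded real-linear maps commuting with ci.\<close>
definition bop :: "('h \<Rightarrow> 'h) \<Rightarrow> ('h::real_normed_vector \<Rightarrow> 'h) \<Rightarrow> bool" where
  "bop ci x \<longleftrightarrow> bounded_linear x \<and> (\<forall>v. x (ci v) = ci (x v))"

definition commutant :: "('h \<Rightarrow> 'h) \<Rightarrow> ('h::real_normed_vector \<Rightarrow> 'h) set \<Rightarrow> ('h \<Rightarrow> 'h) set" where
  "commutant ci A = {y. bop ci y \<and> (\<forall>x\<in>A. y \<circ> x = x \<circ> y)}"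

definition is_adjoint :: "('h::real_inner \<Rightarrow> 'h) \<Rightarrow> ('h \<Rightarrow> 'h) \<Rightarrow> bool" where
  "is_adjoint y x \<longleftrightarrow> (\<forall>u v. inner (y u) v = inner u (x v))"

text \<open>von Neumann algebra: self-adjoint set of bounded operators equal to its bicommutant
  (equivalently, a unital WOT-closed *-subalgebra of B(H), by the bicommutant theorem).\<close>
definition von_neumann_algebra :: "('h \<Rightarrow> 'h) \<Rightarrow> ('h::real_inner \<Rightarrow> 'h) set \<Rightarrow> bool" where
  "von_neumann_algebra ci M \<longleftrightarrow> (\<forall>x\<in>M. bop ci x) \<and> (\<forall>x\<in>M. \<exists>y\<in>M. is_adjoint y x)
     \<and> commutant ci (commutant ci M) = M"

definition separating_vector :: "('h \<Rightarrow> 'h::real_vector) set \<Rightarrow> 'h \<Rightarrow> bool" where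
  "separating_vector M \<Omega> \<longleftrightarrow> (\<forall>x\<in>M. x \<Omega> = 0 \<longrightarrow> x = fzero)"

definition compact_map_on :: "('h::real_normed_vector \<Rightarrow> 'h) set \<Rightarrow> (('h \<Rightarrow> 'h) \<Rightarrow> 'k::metric_space) \<Rightarrow> bool" where
  "compact_map_on M f \<longleftrightarrow> compact (closure (f ` {x\<in>M. onorm x \<le> 1}))"

definition seminorm_on :: "('h \<Rightarrow> 'h) \<Rightarrow> ('h::real_vector \<Rightarrow> 'h) set \<Rightarrow> ('h \<Rightarrow> 'h) set
    \<Rightarrow> (('h \<Rightarrow> 'h) \<times> ('h \<Rightarrow> 'h) \<Rightarrow> real) \<Rightarrow> bool" where
  "seminorm_on ci M N L \<longleftrightarrow>
     (\<forall>x\<in>M. \<forall>y\<in>N. 0 \<le> L (x, y))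
   \<and> (\<forall>x\<in>M. \<forall>y\<in>N. \<forall>c. L (cscale ci c x, cscale ci c y) = cmod c * L (x, y))
   \<and> (\<forall>x\<in>M. \<forall>y\<in>N. \<forall>x'\<in>M. \<forall>y'\<in>N. L (fadd x x', fadd y y') \<le> L (x, y) + L (x', y'))"

definition Lset :: "('h \<Rightarrow> 'h) \<Rightarrow> ('h::real_vector \<Rightarrow> 'h) set \<Rightarrow> (('h \<Rightarrow> 'h) \<Rightarrow> real)
    \<Rightarrow> ('h \<Rightarrow> 'h) set \<Rightarrow> (('h \<Rightarrow> 'h) \<Rightarrow> real) \<Rightarrow> (('h \<Rightarrow> 'h) \<times> ('h \<Rightarrow> 'h) \<Rightarrow> real) set" where
  "Lset ci M LM N LN = {L. seminorm_on ci M N L \<and> (\<forall>x\<in>M. L (x, fzero) = LM x)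
       \<and> (\<forall>y\<in>N. L (fzero, y) = LN y)}"

text \<open>2x2 matrices over operators, indexed by bool (False = first row/column),
  acting on H \<oplus> H.\<close>
type_synonym 'h mat2 = "bool \<Rightarrow> bool \<Rightarrow> ('h \<Rightarrow> 'h)"

definition mat_op :: "'h mat2 \<Rightarrow> 'h \<times> 'h \<Rightarrow> 'h::real_vector \<times> 'h" where
  "mat_op a = (\<lambda>(u1, u2). (a False False u1 + a False True u2, a True False u1 + a True True u2))"

text \<open>Positivity of an operator on a (complex) Hilbert space. For complex-linear operators,
  real self-adjointness coincides with complex self-adjointness, and then
  <Au,u>_C = inner (A u) u.\<close>
definition positive_op :: "('k::real_inner \<Rightarrow> 'k) \<Rightarrow> bool" where
  "positive_op A \<longleftrightarrow> (\<forall>u v. inner (A u) v = inner u (A v)) \<and> (\<forall>u. 0 \<le> inner (A u) u)"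

definition Xset :: "('h::real_inner \<Rightarrow> 'h) set \<Rightarrow> 'h mat2 set" where
  "Xset M = {a. (\<forall>i j. a i j \<in> M) \<and> positive_op (mat_op a) \<and> onorm (mat_op a) \<le> 1}"

definition Lmat :: "(('h \<Rightarrow> 'h) \<times> ('h \<Rightarrow> 'h) \<Rightarrow> real) \<Rightarrow> 'h mat2 \<Rightarrow> 'h mat2 \<Rightarrow> real" where
  "Lmat L a b = Max ((\<lambda>(i, j). L (a i j, b i j)) ` UNIV)"

definition mneg :: "'h::real_vector mat2 \<Rightarrow> 'h mat2" where
  "mneg b = (\<lambda>i j. fneg (b i j))"

definition distH :: "(('h \<Rightarrow> 'h) \<times> ('h \<Rightarrow> 'h) \<Rightarrow> real) \<Rightarrow> 'h::real_vector mat2 set \<Rightarrow> 'h mat2 set \<Rightarrow> ereal" where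
  "distH L XM XN = max (SUP x\<in>XM. INF y\<in>XN. ereal (Lmat L x (mneg y)))
                       (SUP y\<in>XN. INF x\<in>XM. ereal (Lmat L x (mneg y)))"

definition dist_qGH :: "('h \<Rightarrow> 'h) \<Rightarrow> ('h::real_inner \<Rightarrow> 'h) set \<Rightarrow> (('h \<Rightarrow> 'h) \<Rightarrow> real)
    \<Rightarrow> ('h \<Rightarrow> 'h) set \<Rightarrow> (('h \<Rightarrow> 'h) \<Rightarrow> real) \<Rightarrow> ereal" where
  "dist_qGH ci M LM N LN = (INF L\<in>Lset ci M LM N LN. distH L (Xset M) (Xset N))"

end

theory Submission
  imports Defs
begin

lemma cs_orth:
  assumes "complex_structure ci" shows "inner (ci u) u = 0"
proof -
  have "inner (ci u) u = inner (ci (ci u)) (ci u)" using assms unfolding complex_structure_def by metis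
  also have "\<dots> = - inner u (ci u)" using assms unfolding complex_structure_def by simp
  finally show ?thesis by (simp add: inner_commute)
qed

lemma cs_norm:
  assumes "complex_structure ci"
  shows "norm (a *\<^sub>R u + b *\<^sub>R ci u) = sqrt (a^2 + b^2) * norm u"
proof -
  have o: "inner u (ci u) = 0" using cs_orth[OF assms] by (simp add: inner_commute)
  have cc: "inner (ci u) (ci u) = inner u u" using assms unfolding complex_structure_def by simp
  have "(norm (a *\<^sub>R u + b *\<^sub>R ci u))^2 = inner (a *\<^sub>R u + b *\<^sub>R ci u) (a *\<^sub>R u + b *\<^sub>R ci u)"
    by (simp add: power2_norm_eq_inner)
  also have "\<dots> = a^2 * inner u u + b^2 * inner (ci u) (ci u) + 2*a*b*inner u (ci u)"
    by (simp add: inner_add_left inner_add_right inner_commute power2_eq_square algebra_simps)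
  also have "\<dots> = (a^2+b^2) * (norm u)^2" using o cc by (simp add: power2_norm_eq_inner algebra_simps)
  finally have "(norm (a *\<^sub>R u + b *\<^sub>R ci u))^2 = (sqrt (a^2 + b^2) * norm u)^2"
    by (simp add: power_mult_distrib)
  thus ?thesis by (simp add: power2_eq_iff_nonneg)
qed

lemma bop_cscale:
  assumes "bop ci T" "complex_structure ci"
  shows "T (a *\<^sub>R u + b *\<^sub>R ci u) = a *\<^sub>R T u + b *\<^sub>R ci (T u)"
proof -
  interpret bounded_linear T using assms(1) unfolding bop_def by simp
  show ?thesis using assms(1) unfolding bop_def by (simp add: add scaleR)
qed

lemma M_scale:
  assumes vn: "von_neumann_algebra ci M" and x: "x \<in> M" and cs: "complex_structure ci"
  shows "(\<lambda>v. c *\<^sub>R x v) \<in> M"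
proof -
  have bx: "bop ci x" using vn x unfolding von_neumann_algebra_def by blast
  have eq: "commutant ci (commutant ci M) = M" using vn unfolding von_neumann_algebra_def by blast
  have xc: "x \<in> commutant ci (commutant ci M)" using eq x by simp
  have lci: "linear ci" using cs unfolding complex_structure_def by simp
  have "bop ci (\<lambda>v. c *\<^sub>R x v)"
  proof -
    have bl: "bounded_linear x" using bx unfolding bop_def by simp
    have "bounded_linear (\<lambda>v. c *\<^sub>R x v)"
      using bounded_linear_compose[OF bounded_linear_scaleR_right bl] by (simp add: o_def)
    moreover have "\<forall>v. c *\<^sub>R x (ci v) = ci (c *\<^sub>R x v)"
      using bx lci unfolding bop_def by (simp add: linear_scale)
    ultimately show ?thesis unfolding bop_def by simp
  qed
  moreover have "\<forall>y\<in>commutant ci M. (\<lambda>v. c *\<^sub>R x v) \<circ> y = y \<circ> (\<lambda>v. c *\<^sub>R x v)"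
  proof
    fix y assume y: "y \<in> commutant ci M"
    have ly: "linear y" using y unfolding commutant_def bop_def by (auto dest: bounded_linear.linear)
    have "x \<circ> y = y \<circ> x" using xc y unfolding commutant_def by auto
    hence "\<And>v. x (y v) = y (x v)" by (metis comp_apply)
    thus "(\<lambda>v. c *\<^sub>R x v) \<circ> y = y \<circ> (\<lambda>v. c *\<^sub>R x v)"
      using ly by (auto simp: linear_scale)
  qed
  ultimately have "(\<lambda>v. c *\<^sub>R x v) \<in> commutant ci (commutant ci M)"
    unfolding commutant_def by simp
  thus ?thesis using eq by simp
qed

lemma key:
  assumes cs: "complex_structure ci" and vn: "von_neumann_algebra ci M"
    and bT: "bop ci T" and bS: "bop ci S" and aM: "a \<in> M" and ao: "onorm a \<le> 1"
  shows "ereal (norm (T (a \<Omega>) - S (a \<Omega>)))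
     \<le> Sup ({0} \<union> {ereal (norm (T (x \<Omega>) - S (x \<Omega>))) | x. x \<in> M \<and> onorm x = 1})"
    (is "_ \<le> Sup ?A")
proof -
  have bla: "bounded_linear a" using vn aM unfolding von_neumann_algebra_def bop_def by blast
  have lT: "linear T" using bT unfolding bop_def by (simp add: bounded_linear.linear)
  have lS: "linear S" using bS unfolding bop_def by (simp add: bounded_linear.linear)
  show ?thesis
  proof (cases "onorm a = 0")
    case True
    hence "a \<Omega> = 0" using onorm_eq_0[OF bla] by simp
    hence "ereal (norm (T (a \<Omega>) - S (a \<Omega>))) = 0" using lT lS by (simp add: linear_0)
    also have "(0::ereal) \<le> Sup ?A" by (rule Sup_upper) simp
    finally show ?thesis .
  next
    case False
    define c where "c = onorm a"
    have cpos: "c > 0" using False onorm_pos_le[OF bla] unfolding c_def by simp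
    define a' where "a' = (\<lambda>v. (1/c) *\<^sub>R a v)"
    have a'M: "a' \<in> M" unfolding a'_def by (rule M_scale[OF vn aM cs])
    have "onorm a' = \<bar>1/c\<bar> * onorm a" unfolding a'_def by (rule onorm_scaleR[OF bla])
    hence o1: "onorm a' = 1" using cpos unfolding c_def by simp
    have "a \<Omega> = c *\<^sub>R a' \<Omega>" using cpos unfolding a'_def by simp
    hence "T (a \<Omega>) - S (a \<Omega>) = c *\<^sub>R (T (a' \<Omega>) - S (a' \<Omega>))"
      using lT lS by (simp add: linear_scale scaleR_diff_right)
    hence "norm (T (a \<Omega>) - S (a \<Omega>)) = c * norm (T (a' \<Omega>) - S (a' \<Omega>))" using cpos by simp
    also have "\<dots> \<le> norm (T (a' \<Omega>) - S (a' \<Omega>))"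
      using ao cpos unfolding c_def by (intro mult_left_le_one_le) auto
    finally have "ereal (norm (T (a \<Omega>) - S (a \<Omega>))) \<le> ereal (norm (T (a' \<Omega>) - S (a' \<Omega>)))" by simp
    also have "\<dots> \<le> Sup ?A" by (rule Sup_upper) (use a'M o1 in blast)
    finally show ?thesis .
  qed
qed

lemma mat_op_bl:
  fixes a :: "'h::real_normed_vector mat2"
  assumes "\<And>i j. bounded_linear (a i j)"
  shows "bounded_linear (mat_op a)"
proof -
  have e: "mat_op a = (\<lambda>p. (a False False (fst p) + a False True (snd p),
                              a True False (fst p) + a True True (snd p)))"
    by (auto simp: mat_op_def fun_eq_iff split: prod.split)
  have c: "\<And>i j. bounded_linear (\<lambda>p. a i j (fst p))" "\<And>i j. bounded_linear (\<lambda>p. a i j (snd p))"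
    using bounded_linear_compose[OF assms bounded_linear_fst]
      bounded_linear_compose[OF assms bounded_linear_snd] by auto
  show ?thesis unfolding e
    by (intro bounded_linear_Pair bounded_linear_add c)
qed

lemma entry_le:
  fixes M :: "('h::real_inner \<Rightarrow> 'h) set"
  assumes vn: "von_neumann_algebra ci M" and x: "x \<in> Xset M"
  shows "onorm (x i j) \<le> 1"
proof -
  have bl: "\<And>i j. bounded_linear (x i j)" using vn x
    unfolding von_neumann_algebra_def bop_def Xset_def by blast
  have blm: "bounded_linear (mat_op x)" by (rule mat_op_bl[OF bl])
  have om: "onorm (mat_op x) \<le> 1" using x unfolding Xset_def by simp
  have z: "\<And>i j. x i j 0 = 0" using bl by (simp add: linear_simps(3) bounded_linear.linear)
  show ?thesis
  proof (rule onorm_bound)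
    fix u
    define p :: "'h \<times> 'h" where "p = (if j then (0, u) else (u, 0))"
    have np: "norm p = norm u" unfolding p_def by (simp add: norm_Pair)
    have "mat_op x p = (x False j u, x True j u)"
      unfolding p_def mat_op_def using z by auto
    hence "norm (x i j u) \<le> norm (mat_op x p)"
      by (cases i) (simp_all add: norm_fst_le norm_snd_le)
    also have "\<dots> \<le> onorm (mat_op x) * norm p" by (rule onorm[OF blm])
    also have "\<dots> \<le> 1 * norm u" using om np by (metis mult_right_mono norm_ge_zero)
    finally show "norm (x i j u) \<le> 1 * norm u" .
  qed simp
qed

theorem mainTheorem13:
  fixes ci :: "'h::{real_inner, complete_space} \<Rightarrow> 'h"
    and M :: "('h \<Rightarrow> 'h) set" and \<Omega> :: 'h and T S :: "'h \<Rightarrow> 'h"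
  assumes "complex_structure ci"
    and "separable_space_set (UNIV :: 'h set)"
    and "von_neumann_algebra ci M"
    and "separating_vector M \<Omega>"
    and "bop ci T" and "bop ci S" and "inj T" and "inj S"
    and "compact_map_on M (\<lambda>x. T (x \<Omega>))" and "compact_map_on M (\<lambda>x. S (x \<Omega>))"
  shows "(\<lambda>(x, y). norm (T (x \<Omega>) + S (y \<Omega>)))
           \<in> Lset ci M (\<lambda>x. norm (T (x \<Omega>))) M (\<lambda>y. norm (S (y \<Omega>)))
       \<and> dist_qGH ci M (\<lambda>x. norm (T (x \<Omega>))) M (\<lambda>y. norm (S (y \<Omega>)))
           \<le> Sup ({0} \<union> {ereal (norm (T (x \<Omega>) - S (x \<Omega>))) | x. x \<in> M \<and> onorm x = 1})"
proof -
  note cs = assms(1) and vn = assms(3) and bT = assms(5) and bS = assms(6)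
  define J where "J = (\<lambda>(x, y). norm (T (x \<Omega>) + S (y \<Omega>)))"
  define Sp where "Sp = Sup ({0} \<union> {ereal (norm (T (x \<Omega>) - S (x \<Omega>))) | x. x \<in> M \<and> onorm x = 1})"
  have lT: "linear T" using bT unfolding bop_def by (simp add: bounded_linear.linear)
  have lS: "linear S" using bS unfolding bop_def by (simp add: bounded_linear.linear)
  have lci: "linear ci" using cs unfolding complex_structure_def by simp
  have hom: "J (cscale ci c x, cscale ci c y) = cmod c * J (x, y)" for c x y
  proof -
    have "T (cscale ci c x \<Omega>) + S (cscale ci c y \<Omega>)
        = Re c *\<^sub>R (T (x \<Omega>) + S (y \<Omega>)) + Im c *\<^sub>R ci (T (x \<Omega>) + S (y \<Omega>))"
      unfolding cscale_def using bop_cscale[OF bT cs] bop_cscale[OF bS cs] lci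
      by (simp add: linear_add algebra_simps)
    thus ?thesis unfolding J_def using cs_norm[OF cs] by (simp add: norm_complex_def)
  qed
  have tri: "J (fadd x x', fadd y y') \<le> J (x, y) + J (x', y')" for x y x' y'
  proof -
    have "T (fadd x x' \<Omega>) + S (fadd y y' \<Omega>) = (T (x \<Omega>) + S (y \<Omega>)) + (T (x' \<Omega>) + S (y' \<Omega>))"
      unfolding fadd_def using lT lS by (simp add: linear_add algebra_simps)
    thus ?thesis unfolding J_def by (simp add: norm_triangle_ineq)
  qed
  have part1: "J \<in> Lset ci M (\<lambda>x. norm (T (x \<Omega>))) M (\<lambda>y. norm (S (y \<Omega>)))"
    unfolding Lset_def seminorm_on_def
    using hom tri lT lS by (auto simp: J_def fzero_def linear_0)
  have lm: "ereal (Lmat J x (mneg x)) \<le> Sp" if x: "x \<in> Xset M" for x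
  proof -
    have fin: "finite ((\<lambda>(i, j). J (x i j, mneg x i j)) ` UNIV)" by simp
    have "Lmat J x (mneg x) \<in> (\<lambda>(i, j). J (x i j, mneg x i j)) ` UNIV"
      unfolding Lmat_def by (rule Max_in[OF fin]) simp
    then obtain i j where e: "Lmat J x (mneg x) = J (x i j, mneg x i j)" by auto
    have "J (x i j, mneg x i j) = norm (T (x i j \<Omega>) - S (x i j \<Omega>))"
      unfolding J_def mneg_def fneg_def using lS by (simp add: linear_neg)
    moreover have "x i j \<in> M" using x unfolding Xset_def by simp
    ultimately show ?thesis using e key[OF cs vn bT bS _ entry_le[OF vn x]] unfolding Sp_def by simp
  qed
  have d: "distH J (Xset M) (Xset M) \<le> Sp"
    unfolding distH_def
  proof (rule max.boundedI)
    show "(SUP x\<in>Xset M. INF y\<in>Xset M. ereal (Lmat J x (mneg y))) \<le> Sp"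
    proof (rule SUP_least)
      fix x assume x: "x \<in> Xset M"
      show "(INF y\<in>Xset M. ereal (Lmat J x (mneg y))) \<le> Sp"
        by (rule INF_lower2[OF x]) (rule lm[OF x])
    qed
    show "(SUP y\<in>Xset M. INF x\<in>Xset M. ereal (Lmat J x (mneg y))) \<le> Sp"
    proof (rule SUP_least)
      fix x assume x: "x \<in> Xset M"
      show "(INF y\<in>Xset M. ereal (Lmat J y (mneg x))) \<le> Sp"
        by (rule INF_lower2[OF x]) (rule lm[OF x])
    qed
  qed
  have "dist_qGH ci M (\<lambda>x. norm (T (x \<Omega>))) M (\<lambda>y. norm (S (y \<Omega>))) \<le> distH J (Xset M) (Xset M)"
    unfolding dist_qGH_def by (rule INF_lower[OF part1])
  with d part1 show ?thesis unfolding J_def Sp_def by simp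
qed

end
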